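(* $\mathbf{Ex}\equiv^{\mathrm{fin}}_{\mathrm{Learn}}\mathbf{PL}$ and $\mathbf{Ex}<_{\mathrm{Learn}}\mathbf{PL}$: a finite family of structures is $\mathbf{Ex}$-learnable iff it is $\mathbf{PL}$-learnable; every $\mathbf{Ex}$-learnable family is $\mathbf{PL}$-learnable, and some $\mathbf{PL}$-learnable family is not $\mathbf{Ex}$-learnable.
   Context: All structures are countable, have domain $\mathbb{N}$, are in a finite relational signature, and are identified with their atomic diagrams. A family of structures $\mathfrak{K}$ is a countable set of pairwise nonisomorphic such structures; $\mathcal{S}\restriction_s$ is the finite substructure on $\{0,\dots,s\}$; $\mathrm{LD}(\mathfrak{K})$ is the set of structures with domain $\mathbb{N}$ isomorphic to a member of $\mathfrak{K}$. A learner is an arbitrary function from $\{\mathcal{S}\restriction_s:\mathcal{S}\in\mathrm{LD}(\mathfrak{K})\}$ to $\{\ulcorner\mathcal{A}\urcorner:\mathcal{A}\in\mathfrak{K}\}\cup\{?\}$ (distinct formal symbols). $\mathfrak{K}$ is $\mathbf{Ex}$-learnable if some learner $\mathbf{M}$ satisfies: for every $\mathcal{S}\in\mathrm{LD}(\mathfrak{K})$, $\mathbf{M}(\mathcal{S}\restriction_n)$ is eventually constantly $\ulcorner\mathcal{A}\urcorner$ where $\mathcal{A}\in\mathfrak{K}$, $\mathcal{A}\cong\mathcal{S}$. $\mathfrak{K}$ is $\mathbf{PL}$-learnable if some learner $\mathbf{M}$ satisfies: for every $\mathcal{S}\in\mathrm{LD}(\mathfrak{K})$ and $\mathcal{A}\in\mathfrak{K}$,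 $\{n:\mathbf{M}(\mathcal{S}\restriction_n)=\ulcorner\mathcal{A}\urcorner\}$ is infinite iff $\mathcal{A}\cong\mathcal{S}$. For criteria $X,Y$: $X\leq_{\mathrm{Learn}}Y$ iff every $X$-learnable family is $Y$-learnable; $\leq^{\mathrm{fin}}_{\mathrm{Learn}}$ is the same restricted to finite families; $<$ means $\leq$ but not $\geq$; $\equiv$ means both. *)

theory Defs
  imports Main "HOL-Library.Countable_Set"
begin

text \<open>A finite relational signature is a list of arities: relation symbol i (i < length sig)
has arity sig ! i.  A structure with domain the naturals is identified with its atomic
diagram: for each symbol i the set of tuples (lists of naturals) in the relation.\<close>

type_synonym sig = "nat list"
type_synonym struct = "nat \<Rightarrow> nat list set"

definition wf_struct :: "sig \<Rightarrow> struct \<Rightarrow> bool" where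
  "wf_struct \<sigma> S \<longleftrightarrow> (\<forall>i xs. xs \<in> S i \<longrightarrow> i < length \<sigma> \<and> length xs = \<sigma> ! i)"

definition iso :: "sig \<Rightarrow> struct \<Rightarrow> struct \<Rightarrow> bool" where
  "iso \<sigma> A B \<longleftrightarrow> (\<exists>f::nat \<Rightarrow> nat. bij f \<and>
     (\<forall>i < length \<sigma>. \<forall>xs. length xs = \<sigma> ! i \<longrightarrow> (xs \<in> A i \<longleftrightarrow> map f xs \<in> B i)))"

definition family :: "sig \<Rightarrow> struct set \<Rightarrow> bool" where
  "family \<sigma> K \<longleftrightarrow> countable K \<and> (\<forall>A\<in>K. wf_struct \<sigma> A) \<and>
     (\<forall>A\<in>K. \<forall>B\<in>K. iso \<sigma> A B \<longrightarrow> A = B)"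

definition LD :: "sig \<Rightarrow> struct set \<Rightarrow> struct set" where
  "LD \<sigma> K = {S. wf_struct \<sigma> S \<and> (\<exists>A\<in>K. iso \<sigma> S A)}"

text \<open>The finite substructure on {0,...,s}, represented by s together with its atomic diagram.\<close>
definition restr :: "struct \<Rightarrow> nat \<Rightarrow> nat \<times> struct" where
  "restr S s = (s, \<lambda>i. {xs \<in> S i. \<forall>x\<in>set xs. x \<le> s})"

text \<open>A learner maps finite substructures to a conjecture: Some A (the index of A \<in> K) or
None (the symbol ?).  Only its values on restrictions of members of LD(K) matter.\<close>
type_synonym learner = "nat \<times> struct \<Rightarrow> struct option"

definition is_learner :: "struct set \<Rightarrow> learner \<Rightarrow> bool" where
  "is_learner K M \<longleftrightarrow> (\<forall>x. M x \<in> insert None (Some ` K))"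

definition Ex_learns :: "sig \<Rightarrow> struct set \<Rightarrow> learner \<Rightarrow> bool" where
  "Ex_learns \<sigma> K M \<longleftrightarrow> (\<forall>S\<in>LD \<sigma> K. \<exists>A\<in>K. iso \<sigma> A S \<and>
      (\<exists>n0. \<forall>n\<ge>n0. M (restr S n) = Some A))"

definition PL_learns :: "sig \<Rightarrow> struct set \<Rightarrow> learner \<Rightarrow> bool" where
  "PL_learns \<sigma> K M \<longleftrightarrow> (\<forall>S\<in>LD \<sigma> K. \<forall>A\<in>K.
      infinite {n. M (restr S n) = Some A} \<longleftrightarrow> iso \<sigma> A S)"

definition Ex_learnable :: "sig \<Rightarrow> struct set \<Rightarrow> bool" where
  "Ex_learnable \<sigma> K \<longleftrightarrow> (\<exists>M. is_learner K M \<and> Ex_learns \<sigma> K M)"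

definition PL_learnable :: "sig \<Rightarrow> struct set \<Rightarrow> bool" where
  "PL_learnable \<sigma> K \<longleftrightarrow> (\<exists>M. is_learner K M \<and> PL_learns \<sigma> K M)"

end

theory Submission
  imports Defs
begin


lemma iso_sym: assumes "iso \<sigma> A B" shows "iso \<sigma> B A"
proof -
  obtain f where f: "bij f" and h: "\<forall>i < length \<sigma>. \<forall>xs. length xs = \<sigma> ! i \<longrightarrow> (xs \<in> A i \<longleftrightarrow> map f xs \<in> B i)"
    using assms unfolding iso_def by blast
  have b: "bij (inv f)" using f by (simp add: bij_imp_bij_inv)
  have "\<forall>i < length \<sigma>. \<forall>xs. length xs = \<sigma> ! i \<longrightarrow> (xs \<in> B i \<longleftrightarrow> map (inv f) xs \<in> A i)"
  proof (intro allI impI)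
    fix i and xs :: "nat list" assume i: "i < length \<sigma>" and l: "length xs = \<sigma> ! i"
    have "map f (map (inv f) xs) = xs" using f by (simp add: bij_is_surj surj_f_inv_f map_idI)
    then show "(xs \<in> B i \<longleftrightarrow> map (inv f) xs \<in> A i)" using h i l by (metis length_map)
  qed
  then show ?thesis using b unfolding iso_def by blast
qed

lemma iso_trans: assumes "iso \<sigma> A B" "iso \<sigma> B C" shows "iso \<sigma> A C"
proof -
  obtain f where f: "bij f" and h: "\<forall>i < length \<sigma>. \<forall>xs. length xs = \<sigma> ! i \<longrightarrow> (xs \<in> A i \<longleftrightarrow> map f xs \<in> B i)"
    using assms(1) unfolding iso_def by blast
  obtain g where g: "bij g" and h2: "\<forall>i < length \<sigma>. \<forall>xs. length xs = \<sigma> ! i \<longrightarrow> (xs \<in> B i \<longleftrightarrow> map g xs \<in> C i)"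
    using assms(2) unfolding iso_def by blast
  have "bij (g \<circ> f)" using f g by (simp add: bij_comp)
  moreover have "\<forall>i < length \<sigma>. \<forall>xs. length xs = \<sigma> ! i \<longrightarrow> (xs \<in> A i \<longleftrightarrow> map (g \<circ> f) xs \<in> C i)"
    using h h2 by (metis length_map map_map)
  ultimately show ?thesis unfolding iso_def by blast
qed

lemma fam_uniq: "family \<sigma> K \<Longrightarrow> A \<in> K \<Longrightarrow> B \<in> K \<Longrightarrow> iso \<sigma> A S \<Longrightarrow> iso \<sigma> B S \<Longrightarrow> A = B"
  unfolding family_def by (meson iso_sym iso_trans)

lemma Ex_PL: assumes "family \<sigma> K" "Ex_learnable \<sigma> K" shows "PL_learnable \<sigma> K"
proof -
  obtain M where M: "is_learner K M" "Ex_learns \<sigma> K M" using assms(2) unfolding Ex_learnable_def by blast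
  have "PL_learns \<sigma> K M" unfolding PL_learns_def
  proof (intro ballI)
    fix S B assume S: "S \<in> LD \<sigma> K" and B: "B \<in> K"
    obtain A n0 where A: "A \<in> K" "iso \<sigma> A S" and n0: "\<forall>n\<ge>n0. M (restr S n) = Some A"
      using M(2) S unfolding Ex_learns_def by blast
    show "infinite {n. M (restr S n) = Some B} \<longleftrightarrow> iso \<sigma> B S"
    proof (cases "B = A")
      case True
      have "{n0..} \<subseteq> {n. M (restr S n) = Some B}" using n0 True by auto
      then have "infinite {n. M (restr S n) = Some B}" using infinite_Ici finite_subset by blast
      then show ?thesis using True A by simp
    next
      case False
      have "{n. M (restr S n) = Some B} \<subseteq> {..<n0}" using n0 False by (auto simp: not_less)
      then have "finite {n. M (restr S n) = Some B}" using finite_subset by blast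
      moreover have "\<not> iso \<sigma> B S" using fam_uniq[OF assms(1) A(1) B] A False by metis
      ultimately show ?thesis by simp
    qed
  qed
  then show ?thesis using M(1) unfolding PL_learnable_def by blast
qed

definition R :: "nat \<times> struct \<Rightarrow> nat \<Rightarrow> nat \<times> struct" where
  "R p m = (m, \<lambda>i. {xs \<in> snd p i. \<forall>x\<in>set xs. x \<le> m})"

lemma R_restr: "m \<le> n \<Longrightarrow> R (restr S n) m = restr S m"
  unfolding R_def restr_def by (auto intro!: ext)

definition M' :: "learner \<Rightarrow> learner" where
  "M' M p = (if \<exists>m \<le> fst p. M (R p m) \<noteq> None
      then M (R p (GREATEST m. m \<le> fst p \<and> M (R p m) \<noteq> None)) else None)"

lemma PL_Ex: assumes "family \<sigma> K" "finite K" "PL_learnable \<sigma> K" shows "Ex_learnable \<sigma> K"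
proof -
  obtain M where M: "is_learner K M" "PL_learns \<sigma> K M" using assms(3) unfolding PL_learnable_def by blast
  have L: "is_learner K (M' M)" unfolding is_learner_def
  proof
    fix x show "M' M x \<in> insert None (Some ` K)"
      using M(1)[unfolded is_learner_def, rule_format] by (simp add: M'_def)
  qed
  have "Ex_learns \<sigma> K (M' M)" unfolding Ex_learns_def
  proof
    fix S assume S: "S \<in> LD \<sigma> K"
    obtain A where A: "A \<in> K" "iso \<sigma> S A" using S unfolding LD_def by blast
    have A2: "iso \<sigma> A S" using A iso_sym by blast
    have inf: "infinite {n. M (restr S n) = Some A}" using M(2) S A A2 unfolding PL_learns_def by blast
    let ?W = "{n. M (restr S n) \<notin> {None, Some A}}"
    have "?W \<subseteq> (\<Union>B\<in>K-{A}. {n. M (restr S n) = Some B})"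
      using M(1) unfolding is_learner_def by blast
    moreover have "finite {n. M (restr S n) = Some B}" if "B \<in> K - {A}" for B
    proof -
      have "\<not> iso \<sigma> B S" using fam_uniq[OF assms(1)] A(1) A2 that by blast
      then show ?thesis using M(2) S that unfolding PL_learns_def by blast
    qed
    ultimately have "finite ?W" using assms(2) by (meson finite_Diff finite_UN_I finite_subset)
    then obtain T where T: "?W \<subseteq> {..<T}" using finite_nat_bounded by blast
    obtain n1 where n1: "n1 \<ge> T" "M (restr S n1) = Some A"
      using inf by (metis (mono_tags, lifting) infinite_nat_iff_unbounded_le mem_Collect_eq)
    have "\<forall>n\<ge>n1. M' M (restr S n) = Some A"
    proof (intro allI impI)
      fix n assume n: "n \<ge> n1"
      let ?P = "\<lambda>m. m \<le> fst (restr S n) \<and> M (R (restr S n) m) \<noteq> None"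
      have fn: "fst (restr S n) = n" by (simp add: restr_def)
      have P1: "?P n1" using n n1 fn R_restr[of n1 n S] by simp
      have bd: "\<forall>y. ?P y \<longrightarrow> y \<le> n" using fn by simp
      have G: "?P (Greatest ?P)" by (rule GreatestI_nat[where P="?P", OF P1]) (use bd in blast)
      have G2: "n1 \<le> Greatest ?P" by (rule Greatest_le_nat[where P="?P", OF P1]) (use bd in blast)
      have ex: "\<exists>m \<le> fst (restr S n). M (R (restr S n) m) \<noteq> None" using P1 by blast
      have eq: "R (restr S n) (Greatest ?P) = restr S (Greatest ?P)" using G fn R_restr by simp
      have "Greatest ?P \<notin> ?W" using T G2 n1(1) by auto
      then have "M (restr S (Greatest ?P)) = Some A" using G eq by auto
      then show "M' M (restr S n) = Some A" unfolding M'_def using ex eq by simp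
    qed
    then show "\<exists>A\<in>K. iso \<sigma> A S \<and> (\<exists>n0. \<forall>n\<ge>n0. M' M (restr S n) = Some A)" using A(1) A2 by blast
  qed
  then show ?thesis using L unfolding Ex_learnable_def by blast
qed



definition U :: "nat set \<Rightarrow> struct" where
  "U X = (\<lambda>i. if i = 0 then {[x] | x. x \<in> X} else {})"

lemma mem_U[simp]: "[x] \<in> U X 0 \<longleftrightarrow> x \<in> X" by (simp add: U_def)

lemma U_inj: "U X = U Y \<Longrightarrow> X = Y"
  by (metis mem_U subsetI subset_antisym)

lemma wf_U: "wf_struct [1] (U X)" unfolding wf_struct_def U_def by auto

definition sim :: "nat set \<Rightarrow> nat set \<Rightarrow> bool" where
  "sim X Y \<longleftrightarrow> (\<exists>f. bij f \<and> (\<forall>x. x \<in> X \<longleftrightarrow> f x \<in> Y))"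

lemma len1: "length xs = Suc 0 \<Longrightarrow> \<exists>x. xs = [x]"
  by (cases xs) auto

lemma iso_U: "iso [1] (U X) (U Y) \<longleftrightarrow> sim X Y"
proof
  assume "iso [1] (U X) (U Y)"
  then obtain f where f: "bij f" "\<forall>xs. length xs = 1 \<longrightarrow> (xs \<in> U X 0 \<longleftrightarrow> map f xs \<in> U Y 0)"
    unfolding iso_def by auto
  have "\<forall>x. x \<in> X \<longleftrightarrow> f x \<in> Y"
  proof
    fix x show "x \<in> X \<longleftrightarrow> f x \<in> Y" using f(2)[rule_format, of "[x]"] by simp
  qed
  then show "sim X Y" using f(1) unfolding sim_def by blast
next
  assume "sim X Y"
  then obtain f where f: "bij f" "\<forall>x. x \<in> X \<longleftrightarrow> f x \<in> Y" unfolding sim_def by blast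
  have "\<forall>i < length [1::nat]. \<forall>xs. length xs = [1::nat] ! i \<longrightarrow> (xs \<in> U X i \<longleftrightarrow> map f xs \<in> U Y i)"
  proof (intro allI impI)
    fix i and xs :: "nat list" assume "i < length [1::nat]" "length xs = [1::nat] ! i"
    then have "i = 0" "length xs = Suc 0" by auto
    then obtain x where "xs = [x]" using len1 by blast
    then show "xs \<in> U X i \<longleftrightarrow> map f xs \<in> U Y i" using f(2) \<open>i = 0\<close> by simp
  qed
  then show "iso [1] (U X) (U Y)" using f(1) unfolding iso_def by blast
qed

lemma sim_sym: "sim X Y \<Longrightarrow> sim Y X" using iso_U iso_sym by metis
lemma sim_trans: "sim X Y \<Longrightarrow> sim Y Z \<Longrightarrow> sim X Z" using iso_U iso_trans by metis

lemma sim_img: assumes "sim X Y" shows "\<exists>f. inj f \<and> Y = f ` X"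
proof -
  obtain f where f: "bij f" "\<forall>x. x \<in> X \<longleftrightarrow> f x \<in> Y" using assms unfolding sim_def by blast
  have "Y = f ` X"
  proof
    show "f ` X \<subseteq> Y" using f(2) by blast
    show "Y \<subseteq> f ` X"
    proof
      fix y assume y: "y \<in> Y"
      obtain x where "y = f x" using f(1) by (metis bij_pointE)
      then show "y \<in> f ` X" using y f(2) by blast
    qed
  qed
  then show ?thesis using f(1) bij_is_inj by blast
qed

lemma sim_fin: "sim X Y \<Longrightarrow> finite X \<longleftrightarrow> finite Y"
  using sim_img by (metis finite_image_iff inj_on_subset subset_UNIV)

lemma sim_card: "sim X Y \<Longrightarrow> card X = card Y"
  using sim_img by (metis card_image inj_on_subset subset_UNIV)

lemma ex_bij: fixes X Y :: "nat set" assumes "finite X \<and> finite Y \<and> card X = card Y \<or> infinite X \<and> infinite Y"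
  shows "\<exists>g. bij_betw g X Y"
proof (cases "finite X")
  case True then show ?thesis using assms finite_same_card_bij by blast
next
  case False
  then have "infinite Y" using assms by blast
  then have "bij_betw (enumerate Y \<circ> the_inv_into UNIV (enumerate X)) X Y"
    using False by (meson bij_betw_the_inv_into bij_betw_trans bij_enumerate)
  then show ?thesis by blast
qed

lemma sim_intro:
  assumes "finite X \<and> finite Y \<and> card X = card Y \<or> infinite X \<and> infinite Y"
    and "infinite (- X)" "infinite (- Y)"
  shows "sim X Y"
proof -
  obtain g where g: "bij_betw g X Y" using ex_bij assms(1) by blast
  obtain h where h: "bij_betw h (- X) (- Y)" using ex_bij assms(2,3) by blast
  define f where "f x = (if x \<in> X then g x else h x)" for x
  have g': "bij_betw f X Y" using g unfolding f_def by (rule bij_betw_cong[THEN iffD1, rotated]) auto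
  have h': "bij_betw f (-X) (-Y)" using h unfolding f_def by (rule bij_betw_cong[THEN iffD1, rotated]) auto
  have "bij_betw f (X \<union> -X) (Y \<union> -Y)" by (rule bij_betw_combine[OF g' h']) auto
  then have b: "bij f" by simp
  have "\<forall>x. x \<in> X \<longleftrightarrow> f x \<in> Y"
    using g' h' by (metis ComplD ComplI bij_betw_apply)
  then show ?thesis using b unfolding sim_def by blast
qed



definition Ev :: "nat set" where "Ev = {x. even x}"
definition Uev :: struct where "Uev = U Ev"
definition K3 :: "struct set" where "K3 = insert Uev (range (\<lambda>k. U {0..<k}))"

lemma Ev_inf: "infinite Ev"
  unfolding Ev_def infinite_nat_iff_unbounded_le
  by (metis dvd_triv_left le_add2 mem_Collect_eq mult_2)

lemma Ev_cinf: "infinite (- Ev)"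
  unfolding Ev_def infinite_nat_iff_unbounded_le
  by (metis Compl_iff dvd_triv_left even_plus_one_iff le_add2 mem_Collect_eq mult_2 le_Suc_eq Suc_eq_plus1 le_add1 le_trans)

lemma fin_cinf: "finite (F::nat set) \<Longrightarrow> infinite (- F)"
  by (metis Compl_partition finite_Un infinite_UNIV_nat)

lemma Uev_ne: "Uev \<noteq> U {0..<k}"
  unfolding Uev_def using U_inj Ev_inf by (metis finite_atLeastLessThan)

lemma Uev_ne2: "U {0..<k} \<noteq> Uev" using Uev_ne by metis

lemma family_K3: "family [1] K3"
  unfolding family_def
proof (intro conjI ballI impI)
  show "countable K3" unfolding K3_def by simp
next
  fix A assume "A \<in> K3" then show "wf_struct [1] A" unfolding K3_def Uev_def using wf_U by auto
next
  fix A B assume A: "A \<in> K3" and B: "B \<in> K3" and i: "iso [1] A B"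
  obtain X where X: "A = U X" "X = Ev \<or> (\<exists>k. X = {0..<k})" using A unfolding K3_def Uev_def by auto
  obtain Y where Y: "B = U Y" "Y = Ev \<or> (\<exists>k. Y = {0..<k})" using B unfolding K3_def Uev_def by auto
  have s: "sim X Y" using i X Y iso_U by simp
  then have "finite X \<longleftrightarrow> finite Y" "card X = card Y" using sim_fin sim_card by auto
  then have "X = Y" using X(2) Y(2) Ev_inf by auto
  then show "A = B" using X Y by simp
qed

lemma LD_char: assumes "S \<in> LD [1] K3"
  shows "\<exists>X. S = U X \<and> (sim X Ev \<or> (\<exists>k. sim X {0..<k}))"
proof -
  have wf: "wf_struct [1] S" and ex: "\<exists>A\<in>K3. iso [1] S A" using assms unfolding LD_def by auto
  let ?X = "{x. [x] \<in> S 0}"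
  have "S = U ?X"
  proof
    fix i show "S i = U ?X i"
    proof (cases "i = 0")
      case True
      have "S 0 = {[x] | x. [x] \<in> S 0}"
      proof
        show "S 0 \<subseteq> {[x] | x. [x] \<in> S 0}"
        proof
          fix xs assume xs: "xs \<in> S 0"
          then have "length xs = Suc 0" using wf unfolding wf_struct_def by fastforce
          then obtain x where "xs = [x]" using len1 by blast
          then show "xs \<in> {[x] | x. [x] \<in> S 0}" using xs by blast
        qed
      qed blast
      then show ?thesis using True unfolding U_def by simp
    next
      case False
      then have "S i = {}" using wf unfolding wf_struct_def by fastforce
      then show ?thesis using False unfolding U_def by simp
    qed
  qed
  moreover obtain A where A: "A \<in> K3" "iso [1] S A" using ex by blast
  ultimately show ?thesis
  proof (cases "A = Uev")
    case True
    then have "sim ?X Ev" using A \<open>S = U ?X\<close> iso_U unfolding Uev_def by metis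
    then show ?thesis using \<open>S = U ?X\<close> by blast
  next
    case False
    then obtain k where "A = U {0..<k}" using A(1) unfolding K3_def by auto
    then have "sim ?X {0..<k}" using A \<open>S = U ?X\<close> iso_U by metis
    then show ?thesis using \<open>S = U ?X\<close> by blast
  qed
qed

lemma U_LD: "sim X Y \<Longrightarrow> U Y \<in> K3 \<Longrightarrow> U X \<in> LD [1] K3"
  unfolding LD_def using wf_U iso_U by blast

lemma restr_U: "restr (U X) n = (n, U (X \<inter> {..n}))"
  by (auto simp: restr_def U_def intro!: ext split: if_splits)

definition LrnP :: learner where
  "LrnP p = (if [fst p] \<in> snd p 0 then Some Uev else Some (U {0..<card {x. [x] \<in> snd p 0}}))"

lemma LrnP_U: "LrnP (restr (U X) n) = (if n \<in> X then Some Uev else Some (U {0..<card (X \<inter> {..n})}))"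
proof -
  have e: "{x. [x] \<in> snd (restr (U X) n) 0} = X \<inter> {..n}" by (auto simp: restr_U)
  have f: "[fst (restr (U X) n)] \<in> snd (restr (U X) n) 0 \<longleftrightarrow> n \<in> X" by (auto simp: restr_U)
  show ?thesis unfolding LrnP_def e f ..
qed

lemma card_big: assumes "infinite (X::nat set)" shows "\<exists>N. j < card (X \<inter> {..N})"
proof -
  obtain B where B: "finite B" "card B = Suc j" "B \<subseteq> X" using infinite_arbitrarily_large assms by blast
  obtain k where k: "B \<subseteq> {..<k}" using finite_nat_bounded B(1) by blast
  have "B \<subseteq> X \<inter> {..k}" using B k by auto
  then have "card B \<le> card (X \<inter> {..k})" by (intro card_mono) auto
  then have "j < card (X \<inter> {..k})" using B by auto
  then show ?thesis by blast
qed

lemma PL_K3: "PL_learnable [1] K3"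
  unfolding PL_learnable_def
proof (intro exI conjI)
  show "is_learner K3 LrnP" unfolding is_learner_def LrnP_def K3_def by auto
  show "PL_learns [1] K3 LrnP" unfolding PL_learns_def
  proof (intro ballI)
    fix S A assume S: "S \<in> LD [1] K3" and A: "A \<in> K3"
    obtain X where X: "S = U X" "sim X Ev \<or> (\<exists>k. sim X {0..<k})" using LD_char S by blast
    have isoA: "iso [1] A S \<longleftrightarrow> (A = Uev \<and> infinite X) \<or> (\<exists>j. A = U {0..<j} \<and> finite X \<and> card X = j)"
    proof -
      { fix Y assume "A = U Y"
        then have "iso [1] A S \<longleftrightarrow> sim Y X" using X iso_U by simp }
      note * = this
      show ?thesis
      proof (cases "A = Uev")
        case True
        have "sim Ev X \<longleftrightarrow> infinite X"
          using X(2) sim_sym sim_fin Ev_inf by (metis finite_atLeastLessThan)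
        then show ?thesis using True *[of Ev] Uev_def Uev_ne by (metis Uev_def)
      next
        case False
        then obtain j where j: "A = U {0..<j}" using A unfolding K3_def by auto
        have "sim {0..<j} X \<longleftrightarrow> finite X \<and> card X = j"
        proof
          assume "sim {0..<j} X" then show "finite X \<and> card X = j" using sim_fin sim_card by fastforce
        next
          assume f: "finite X \<and> card X = j"
          then have "sim X {0..<card X}" using X(2) sim_fin sim_card Ev_inf by (metis card_atLeastLessThan diff_zero)
          then show "sim {0..<j} X" using f sim_sym by simp
        qed
        then show ?thesis using j * False U_inj Uev_ne by (metis atLeastLessThan_eq_iff card_atLeastLessThan diff_zero)
      qed
    qed
    show "infinite {n. LrnP (restr S n) = Some A} \<longleftrightarrow> iso [1] A S"
    proof (cases "A = Uev")
      case True
      have "{n. LrnP (restr S n) = Some A} = X" using True X(1) Uev_ne2 by (auto simp: LrnP_U)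
      then show ?thesis using isoA True Uev_ne by simp
    next
      case False
      then obtain j where j: "A = U {0..<j}" using A unfolding K3_def by auto
      have eq: "{n. LrnP (restr S n) = Some A} = {n. n \<notin> X \<and> card (X \<inter> {..n}) = j}"
        using j X(1) Uev_ne U_inj by (auto simp: LrnP_U) (metis atLeastLessThan_eq_iff card_atLeastLessThan diff_zero)+
      show ?thesis
      proof (cases "finite X")
        case True
        obtain B where B: "X \<subseteq> {..<B}" using finite_nat_bounded True by blast
        have st: "n \<ge> B \<Longrightarrow> X \<inter> {..n} = X \<and> n \<notin> X" for n using B by auto
        show ?thesis
        proof (cases "card X = j")
          case c: True
          have "{B..} \<subseteq> {n. LrnP (restr S n) = Some A}" using eq st c by auto
          then have "infinite {n. LrnP (restr S n) = Some A}" using infinite_Ici finite_subset by blast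
          then show ?thesis using isoA j True c by blast
        next
          case c: False
          have "{n. LrnP (restr S n) = Some A} \<subseteq> {..<B}"
          proof
            fix n assume "n \<in> {n. LrnP (restr S n) = Some A}"
            then have "card (X \<inter> {..n}) = j" using eq by auto
            then show "n \<in> {..<B}" using st[of n] c by (cases "n < B") auto
          qed
          then have "finite {n. LrnP (restr S n) = Some A}" using finite_subset by blast
          moreover have "\<not> iso [1] A S" using isoA j c False by (metis U_inj atLeastLessThan_eq_iff card_atLeastLessThan diff_zero)
          ultimately show ?thesis by simp
        qed
      next
        case inf: False
        obtain N where N: "j < card (X \<inter> {..N})" using card_big inf by blast
        have "n \<ge> N \<Longrightarrow> card (X \<inter> {..N}) \<le> card (X \<inter> {..n})" for n by (intro card_mono) auto
        then have "{n. LrnP (restr S n) = Some A} \<subseteq> {..<N}" using eq N by (auto simp: not_less[symmetric])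
        then have "finite {n. LrnP (restr S n) = Some A}" using finite_subset by blast
        moreover have "\<not> iso [1] A S" using isoA j inf False by blast
        ultimately show ?thesis by simp
      qed
    qed
  qed
qed



definition nxt :: "learner \<Rightarrow> nat \<Rightarrow> nat set \<Rightarrow> nat" where
  "nxt M n F = (SOME m. n < m \<and> M (restr (U F) m) \<noteq> Some Uev)"

primrec st :: "learner \<Rightarrow> nat \<Rightarrow> nat set \<times> nat" where
  "st M 0 = ({}, 0)"
| "st M (Suc j) = (insert (Suc (nxt M (snd (st M j)) (fst (st M j)))) (fst (st M j)),
                   Suc (nxt M (snd (st M j)) (fst (st M j))))"

lemma fin_learn:
  assumes "Ex_learns [1] K3 M" "finite F"
  shows "\<exists>m. n < m \<and> M (restr (U F) m) \<noteq> Some Uev"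
proof -
  have "sim F {0..<card F}" by (rule sim_intro) (use assms(2) fin_cinf in auto)
  then have "U F \<in> LD [1] K3" by (rule U_LD) (auto simp: K3_def)
  then obtain A n0 where A: "A \<in> K3" "iso [1] A (U F)" "\<forall>n\<ge>n0. M (restr (U F) n) = Some A"
    using assms(1) unfolding Ex_learns_def by blast
  have "A \<noteq> Uev"
  proof
    assume "A = Uev"
    then have "sim Ev F" using A(2) iso_U unfolding Uev_def by simp
    then show False using sim_fin Ev_inf assms(2) by blast
  qed
  then have "M (restr (U F) (max n0 (Suc n))) \<noteq> Some Uev" using A(3) by simp
  then show ?thesis by (intro exI[of _ "max n0 (Suc n)"]) auto
qed

theorem not_Ex_K3: "\<not> Ex_learnable [1] K3"
proof
  assume "Ex_learnable [1] K3"
  then obtain M where M: "Ex_learns [1] K3 M" unfolding Ex_learnable_def by blast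
  define F where "F j = fst (st M j)" for j
  define N where "N j = snd (st M j)" for j
  define m where "m j = nxt M (N j) (F j)" for j
  have FS: "F (Suc j) = insert (Suc (m j)) (F j)" for j by (simp add: F_def m_def N_def)
  have NS: "N (Suc j) = Suc (m j)" for j by (simp add: F_def m_def N_def)
  have inv: "finite (F j) \<and> F j \<subseteq> {..N j}" for j
  proof (induction j)
    case 0 then show ?case by (simp add: F_def N_def)
  next
    case (Suc j)
    have "N j < m j" unfolding m_def nxt_def using someI_ex[OF fin_learn[OF M, of "F j" "N j"]] Suc by blast
    then show ?case using Suc FS NS by auto
  qed
  have mprop: "N j < m j \<and> M (restr (U (F j)) (m j)) \<noteq> Some Uev" for j
    unfolding m_def nxt_def using someI_ex[OF fin_learn[OF M, of "F j" "N j"]] inv by blast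
  have Ninc: "N j < N (Suc j)" for j using mprop NS by (metis less_SucI)
  have Nmono: "j \<le> k \<Longrightarrow> N j \<le> N k" for j k
    by (rule lift_Suc_mono_le[of N]) (use Ninc less_imp_le in auto)
  have Nge: "j \<le> N j" for j
  proof (induction j)
    case 0 show ?case by simp
  next
    case (Suc j) show ?case using Suc.IH Ninc[of j] by linarith
  qed
  have Fmono: "j \<le> k \<Longrightarrow> F j \<subseteq> F k" for j k
    by (rule lift_Suc_mono_le[of F]) (use FS in auto)
  have late: "x \<in> F (Suc j + k) \<Longrightarrow> x \<in> F j \<or> Suc (m j) \<le> x" for j k x
  proof (induction k arbitrary: x)
    case 0 then show ?case using FS by auto
  next
    case (Suc k)
    have "x \<in> F (Suc j + k) \<or> x = Suc (m (Suc j + k))" using Suc.prems FS by auto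
    moreover have "Suc (m j) \<le> Suc (m (Suc j + k))"
    proof -
      have "N (Suc j) \<le> N (Suc j + k)" by (rule Nmono) simp
      moreover have "N (Suc j + k) < m (Suc j + k)" using mprop by blast
      ultimately show ?thesis using NS[of j] by linarith
    qed
    ultimately show ?case using Suc.IH by auto
  qed
  define X where "X = (\<Union>j. F j)"
  have cut: "X \<inter> {..m j} = F j" for j
  proof
    show "F j \<subseteq> X \<inter> {..m j}" using inv[of j] mprop[of j] unfolding X_def by auto
    show "X \<inter> {..m j} \<subseteq> F j"
    proof
      fix x assume x: "x \<in> X \<inter> {..m j}"
      then obtain k where k: "x \<in> F k" unfolding X_def by blast
      show "x \<in> F j"
      proof (cases "k \<le> j")
        case True then show ?thesis using Fmono k by blast
      next
        case False
        then have "k = Suc j + (k - Suc j)" by simp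
        then show ?thesis using late[of x j "k - Suc j"] k x by auto
      qed
    qed
  qed
  have mX: "m j \<notin> X" for j using cut[of j] inv[of j] mprop[of j] by auto
  have SmX: "Suc (m j) \<in> X" for j using FS[of j] unfolding X_def by blast
  have mge: "j \<le> m j" for j using Nge[of j] mprop[of j] by simp
  have Xinf: "infinite X" unfolding infinite_nat_iff_unbounded_le
    using SmX mge le_SucI by blast
  have Xcinf: "infinite (- X)" unfolding infinite_nat_iff_unbounded_le
    using mX mge by blast
  have "sim X Ev" by (rule sim_intro) (use Xinf Xcinf Ev_inf Ev_cinf in auto)
  then have "U X \<in> LD [1] K3" by (rule U_LD) (simp add: K3_def Uev_def)
  then obtain A n0 where A: "A \<in> K3" "iso [1] A (U X)" "\<forall>n\<ge>n0. M (restr (U X) n) = Some A"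
    using M unfolding Ex_learns_def by blast
  have "A = Uev"
  proof (rule ccontr)
    assume "A \<noteq> Uev"
    then obtain k where "A = U {0..<k}" using A(1) unfolding K3_def by auto
    then have "sim {0..<k} X" using A(2) iso_U by simp
    then show False using sim_fin Xinf by blast
  qed
  have "restr (U X) (m n0) = restr (U (F n0)) (m n0)"
  proof -
    have "F n0 \<inter> {..m n0} = F n0" using inv[of n0] mprop[of n0] by auto
    then show ?thesis using cut[of n0] by (simp add: restr_U)
  qed
  then have "M (restr (U X) (m n0)) \<noteq> Some Uev" using mprop by simp
  then show False using A(3) mge[of n0] \<open>A = Uev\<close> by simp
qed


theorem mainTheorem16:
  shows "(\<forall>\<sigma> K. family \<sigma> K \<and> finite K \<longrightarrow> (Ex_learnable \<sigma> K \<longleftrightarrow> PL_learnable \<sigma> K))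
       \<and> (\<forall>\<sigma> K. family \<sigma> K \<longrightarrow> Ex_learnable \<sigma> K \<longrightarrow> PL_learnable \<sigma> K)
       \<and> (\<exists>\<sigma> K. family \<sigma> K \<and> PL_learnable \<sigma> K \<and> \<not> Ex_learnable \<sigma> K)"
  using Ex_PL PL_Ex family_K3 PL_K3 not_Ex_K3 by blast

end
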